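(* The compactness theorem holds for propositional team logic $\mathrm{PTL}$.
   Context: $\mathrm{PTL}$ is the closure of propositional logic $\mathrm{PL}$ under the strong negation $\sim$, the material implication (written here $\varphi\Rightarrow\psi$, true in a team iff the team falsifies $\varphi$ or satisfies $\psi$) and the linear implication $\multimap$, interpreted on teams $T$ of propositional assignments: a classical formula holds in $T$ iff it holds for every assignment in $T$; $T\models\sim\varphi$ iff $T\not\models\varphi$; $T\models\varphi\multimap\psi$ iff for all $S,U$ with $S\cup U=T$ (lax splitting), $S\models\varphi$ implies $U\models\psi$. It is a consequence of the soundness and completeness of the Hilbert-style system $\mathsf{H}^0\mathsf{L}\mathsf{S}$ for $\mathrm{PTL}$. *)

theory Defs
  imports Main
begin

type_synonym assignment = "nat \<Rightarrow> bool"
type_synonym team = "assignment set"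

datatype pl = PVar nat | PBot | PNeg pl | PConj pl pl | PDisj pl pl

fun pl_sat :: "assignment \<Rightarrow> pl \<Rightarrow> bool" where
  "pl_sat s (PVar p) = s p"
| "pl_sat s PBot = False"
| "pl_sat s (PNeg a) = (\<not> pl_sat s a)"
| "pl_sat s (PConj a b) = (pl_sat s a \<and> pl_sat s b)"
| "pl_sat s (PDisj a b) = (pl_sat s a \<or> pl_sat s b)"

datatype ptl = Cl pl | SNeg ptl | MImp ptl ptl | LImp ptl ptl

fun team_sat :: "team \<Rightarrow> ptl \<Rightarrow> bool" where
  "team_sat T (Cl a) = (\<forall>s\<in>T. pl_sat s a)"
| "team_sat T (SNeg f) = (\<not> team_sat T f)"
| "team_sat T (MImp f g) = (\<not> team_sat T f \<or> team_sat T g)"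
| "team_sat T (LImp f g) = (\<forall>S U. S \<union> U = T \<longrightarrow> team_sat S f \<longrightarrow> team_sat U g)"

definition ptl_entails :: "ptl set \<Rightarrow> ptl \<Rightarrow> bool" where
  "ptl_entails \<Gamma> \<phi> \<longleftrightarrow> (\<forall>T. (\<forall>\<psi>\<in>\<Gamma>. team_sat T \<psi>) \<longrightarrow> team_sat T \<phi>)"

end

theory Submission
  imports Defs
begin

definition proj :: "nat \<Rightarrow> assignment \<Rightarrow> assignment" where
  "proj n s = (\<lambda>i. if i < n then s i else False)"

fun plb :: "pl \<Rightarrow> nat" where
  "plb (PVar p) = Suc p"
| "plb PBot = 0"
| "plb (PNeg a) = plb a"
| "plb (PConj a b) = max (plb a) (plb b)"
| "plb (PDisj a b) = max (plb a) (plb b)"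

fun ptb :: "ptl \<Rightarrow> nat" where
  "ptb (Cl a) = plb a"
| "ptb (SNeg f) = ptb f"
| "ptb (MImp f g) = max (ptb f) (ptb g)"
| "ptb (LImp f g) = max (ptb f) (ptb g)"

lemma proj_proj: "m \<le> n \<Longrightarrow> proj m (proj n s) = proj m s"
  "n \<le> m \<Longrightarrow> proj m (proj n s) = proj n s"
  by (auto simp: proj_def fun_eq_iff)

lemma proj_idem[simp]: "proj n (proj n s) = proj n s"
  by (simp add: proj_proj)

lemma proj_image_idem[simp]: "proj n ` proj n ` T = proj n ` T"
  by (force simp: image_image)

lemma pl_loc: "plb a \<le> n \<Longrightarrow> pl_sat (proj n s) a = pl_sat s a"
  by (induction a) (auto simp: proj_def)

lemma split_transfer:
  assumes "proj n ` T = proj n ` T'" "S \<union> U = T'"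
  shows "\<exists>S' U'. S' \<union> U' = T \<and> proj n ` S' = proj n ` S \<and> proj n ` U' = proj n ` U"
proof (intro exI conjI)
  let ?S = "{t\<in>T. proj n t \<in> proj n ` S}" and ?U = "{t\<in>T. proj n t \<in> proj n ` U}"
  show "?S \<union> ?U = T"
  proof -
    have "\<And>t. t \<in> T \<Longrightarrow> proj n t \<in> proj n ` S \<or> proj n t \<in> proj n ` U"
      using assms by (metis Un_iff image_Un image_eqI)
    then show ?thesis by auto
  qed
  show "proj n ` ?S = proj n ` S"
  proof
    show "proj n ` ?S \<subseteq> proj n ` S" by auto
    show "proj n ` S \<subseteq> proj n ` ?S"
    proof
      fix x assume "x \<in> proj n ` S"
      then obtain s where s: "s \<in> S" "x = proj n s" by auto
      then have "x \<in> proj n ` T" using assms by auto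
      then obtain t where t: "t \<in> T" "x = proj n t" by auto
      then have "proj n t \<in> proj n ` S" using s by (metis imageI)
      then have "t \<in> ?S" using t by simp
      then show "x \<in> proj n ` ?S" using t by blast
    qed
  qed
  show "proj n ` ?U = proj n ` U"
  proof
    show "proj n ` ?U \<subseteq> proj n ` U" by auto
    show "proj n ` U \<subseteq> proj n ` ?U"
    proof
      fix x assume "x \<in> proj n ` U"
      then obtain s where s: "s \<in> U" "x = proj n s" by auto
      then have "x \<in> proj n ` T" using assms by auto
      then obtain t where t: "t \<in> T" "x = proj n t" by auto
      then have "proj n t \<in> proj n ` U" using s by (metis imageI)
      then have "t \<in> ?U" using t by simp
      then show "x \<in> proj n ` ?U" using t by blast
    qed
  qed
qed

lemma loc_e: "plb a \<le> n \<Longrightarrow> (\<forall>s\<in>X. pl_sat s a) = (\<forall>t\<in>proj n ` X. pl_sat t a)"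
proof -
  assume pa: "plb a \<le> n"
  have h: "pl_sat (proj n s) a = pl_sat s a" for s using pl_loc[OF pa] .
  show ?thesis using h by auto
qed

lemma loc_cl: "proj n ` T = proj n ` T' \<Longrightarrow> plb a \<le> n \<Longrightarrow> (\<forall>s\<in>T. pl_sat s a) = (\<forall>s\<in>T'. pl_sat s a)"
proof -
  assume eq: "proj n ` T = proj n ` T'" and pa: "plb a \<le> n"
  have 1: "(\<forall>t\<in>proj n ` T. pl_sat t a) = (\<forall>t\<in>proj n ` T'. pl_sat t a)" using eq by (simp only:)
  show ?thesis using loc_e[OF pa, of T] loc_e[OF pa, of T'] 1 by (simp only:)
qed

lemma loc: "proj n ` T = proj n ` T' \<Longrightarrow> ptb \<phi> \<le> n \<Longrightarrow> team_sat T \<phi> = team_sat T' \<phi>"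
proof (induction \<phi> arbitrary: T T')
  case (Cl a)
  from Cl.prems(2) have "plb a \<le> n" by (simp only: ptb.simps)
  then show ?case unfolding team_sat.simps by (rule loc_cl[OF Cl.prems(1)])
next
  case (SNeg f) show ?case using SNeg.IH[OF SNeg.prems(1)] SNeg.prems(2) by simp
next
  case (MImp f g)
  have "ptb f \<le> n" "ptb g \<le> n" using MImp.prems(2) by auto
  then show ?case using MImp.IH(1)[OF MImp.prems(1)] MImp.IH(2)[OF MImp.prems(1)] by simp
next
  case (LImp f g)
  have pf: "ptb f \<le> n" "ptb g \<le> n" using LImp.prems(2) by auto
  have dir: "team_sat B (LImp f g)" if eq: "proj n ` A = proj n ` B" and h: "team_sat A (LImp f g)" for A B
  proof -
    have all: "\<forall>S U. S \<union> U = A \<longrightarrow> team_sat S f \<longrightarrow> team_sat U g"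
      using h by (simp only: team_sat.simps)
    have "\<forall>S U. S \<union> U = B \<longrightarrow> team_sat S f \<longrightarrow> team_sat U g"
    proof (intro allI impI)
      fix S U assume su: "S \<union> U = B" and sf: "team_sat S f"
      obtain S' U' where *: "S' \<union> U' = A" "proj n ` S' = proj n ` S" "proj n ` U' = proj n ` U"
        using split_transfer[OF eq su] by iprover
      have sf': "team_sat S' f" using LImp.IH(1)[OF *(2) pf(1)] sf by (simp only:)
      have "team_sat U' g" using all[rule_format, OF *(1) sf'] .
      then show "team_sat U g" using LImp.IH(2)[OF *(3) pf(2)] by (simp only:)
    qed
    then show ?thesis by (simp only: team_sat.simps)
  qed
  have sym: "proj n ` T' = proj n ` T" using LImp.prems(1) by (rule sym)
  show ?case using dir[OF LImp.prems(1)] dir[OF sym] by blast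
qed

lemma finite_range_proj: "finite (range (proj n))"
proof -
  let ?h = "\<lambda>l::bool list. \<lambda>i. if i < n then l ! i else False"
  have eq: "proj n s = ?h (map s [0..<n])" for s
    by (simp add: proj_def fun_eq_iff)
  have sub: "range (proj n) \<subseteq> ?h ` {l. set l \<subseteq> UNIV \<and> length l = n}"
  proof
    fix x assume "x \<in> range (proj n)"
    then obtain s where x: "x = proj n s" by auto
    show "x \<in> ?h ` {l. set l \<subseteq> UNIV \<and> length l = n}"
      unfolding x eq by (rule imageI) simp
  qed
  have fin: "finite {l::bool list. set l \<subseteq> UNIV \<and> length l = n}"
    by (rule finite_lists_length_eq) simp
  show ?thesis by (rule finite_subset[OF sub finite_imageI[OF fin]])
qed

lemma pigeon:
  fixes P :: "nat \<Rightarrow> 'a \<Rightarrow> bool"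
  assumes "finite F" "\<And>m. \<exists>A\<in>F. P m A" "\<And>m m' A. m' \<le> m \<Longrightarrow> P m A \<Longrightarrow> P m' A"
  shows "\<exists>A\<in>F. \<forall>m. P m A"
proof (rule ccontr)
  assume "\<not> ?thesis"
  then have "\<forall>A\<in>F. \<exists>m. \<not> P m A" by auto
  then obtain f :: "_ \<Rightarrow> nat" where f: "\<And>A. A \<in> F \<Longrightarrow> \<not> P (f A) A" by metis
  define M where "M = Max (f ` F)"
  obtain A where A: "A \<in> F" "P M A" using assms(2) by blast
  have "f A \<le> M" using A assms(1) unfolding M_def by auto
  then have "P (f A) A" using assms(3) A by blast
  then show False using f A by blast
qed

definition Gm :: "ptl set \<Rightarrow> nat \<Rightarrow> ptl set" where
  "Gm \<Gamma> m = {\<psi>\<in>\<Gamma>. ptb \<psi> \<le> m}"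

definition good :: "ptl set \<Rightarrow> ptl \<Rightarrow> nat \<Rightarrow> team \<Rightarrow> bool" where
  "good \<Gamma> \<phi> n A \<longleftrightarrow> (\<forall>m. \<exists>T. proj n ` T = A \<and> (\<forall>\<psi>\<in>Gm \<Gamma> m. team_sat T \<psi>) \<and> \<not> team_sat T \<phi>)"

lemma Gm_mono: "m' \<le> m \<Longrightarrow> Gm \<Gamma> m' \<subseteq> Gm \<Gamma> m"
  by (auto simp: Gm_def)

lemma step1:
  assumes H: "\<And>\<Gamma>0. \<Gamma>0 \<subseteq> \<Gamma> \<Longrightarrow> finite \<Gamma>0 \<Longrightarrow> \<exists>T. (\<forall>\<psi>\<in>\<Gamma>0. team_sat T \<psi>) \<and> \<not> team_sat T \<phi>"
  shows "\<exists>T. (\<forall>\<psi>\<in>Gm \<Gamma> m. team_sat T \<psi>) \<and> \<not> team_sat T \<phi>"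
proof -
  let ?Ty = "{A \<in> Pow (range (proj m)). \<exists>\<psi>\<in>Gm \<Gamma> m. \<not> team_sat A \<psi>}"
  define w where "w A = (SOME \<psi>. \<psi>\<in>Gm \<Gamma> m \<and> \<not> team_sat A \<psi>)" for A
  have w: "w A \<in> Gm \<Gamma> m \<and> \<not> team_sat A (w A)" if "A \<in> ?Ty" for A
    using that unfolding w_def by (metis (mono_tags, lifting) mem_Collect_eq someI_ex)
  have fin: "finite (w ` ?Ty)" using finite_range_proj by auto
  have sub: "w ` ?Ty \<subseteq> \<Gamma>" using w by (auto simp: Gm_def)
  obtain T where T: "\<forall>\<psi>\<in>w ` ?Ty. team_sat T \<psi>" "\<not> team_sat T \<phi>" using H[OF sub fin] by blast
  have "\<forall>\<psi>\<in>Gm \<Gamma> m. team_sat T \<psi>"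
  proof (rule ccontr)
    assume "\<not> ?thesis"
    then obtain \<psi> where \<psi>: "\<psi> \<in> Gm \<Gamma> m" "\<not> team_sat T \<psi>" by blast
    let ?A = "proj m ` T"
    have eqA: "proj m ` ?A = proj m ` T" by simp
    have "\<not> team_sat ?A \<psi>" using loc[OF eqA] \<psi> by (auto simp: Gm_def)
    then have A: "?A \<in> ?Ty" using \<psi> by auto
    then have "\<not> team_sat T (w ?A)" using w[OF A] loc[OF eqA, of "w ?A"] by (auto simp: Gm_def)
    then show False using T A by blast
  qed
  then show ?thesis using T by blast
qed

definition wit :: "ptl set \<Rightarrow> ptl \<Rightarrow> nat \<Rightarrow> nat \<Rightarrow> team \<Rightarrow> team \<Rightarrow> bool" where
  "wit \<Gamma> \<phi> k m A T \<longleftrightarrow> proj k ` T = A \<and> (\<forall>\<psi>\<in>Gm \<Gamma> m. team_sat T \<psi>) \<and> \<not> team_sat T \<phi>"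

lemma wit_mono: "m' \<le> m \<Longrightarrow> wit \<Gamma> \<phi> k m A T \<Longrightarrow> wit \<Gamma> \<phi> k m' A T"
  unfolding wit_def using Gm_mono by (meson subsetD)

lemma good_wit: "good \<Gamma> \<phi> n A \<longleftrightarrow> (\<forall>m. \<exists>T. wit \<Gamma> \<phi> n m A T)"
  unfolding good_def wit_def by (rule refl)

lemma step2:
  assumes "\<And>m. \<exists>T. (\<forall>\<psi>\<in>Gm \<Gamma> m. team_sat T \<psi>) \<and> \<not> team_sat T \<phi>"
  shows "\<exists>A. good \<Gamma> \<phi> 0 A"
proof -
  have "\<exists>A\<in>Pow (range (proj 0)). \<forall>m. \<exists>T. wit \<Gamma> \<phi> 0 m A T"
  proof (rule pigeon)
    show "finite (Pow (range (proj 0)))" using finite_range_proj by (rule finite_Pow_iff[THEN iffD2])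
    fix m
    obtain T where T: "(\<forall>\<psi>\<in>Gm \<Gamma> m. team_sat T \<psi>)" "\<not> team_sat T \<phi>" using assms by iprover
    have "wit \<Gamma> \<phi> 0 m (proj 0 ` T) T" unfolding wit_def using T by (intro conjI refl)
    moreover have "proj 0 ` T \<in> Pow (range (proj 0))" by auto
    ultimately show "\<exists>A\<in>Pow (range (proj 0)). \<exists>T. wit \<Gamma> \<phi> 0 m A T" by blast
  next
    fix m m' A assume "m' \<le> (m::nat)" "\<exists>T. wit \<Gamma> \<phi> 0 m A T"
    then show "\<exists>T. wit \<Gamma> \<phi> 0 m' A T" using wit_mono by iprover
  qed
  then show ?thesis unfolding good_wit by blast
qed

lemma step3:
  assumes "good \<Gamma> \<phi> n A"
  shows "\<exists>B. good \<Gamma> \<phi> (Suc n) B \<and> proj n ` B = A"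
proof -
  let ?F = "{B\<in>Pow (range (proj (Suc n))). proj n ` B = A}"
  have "\<exists>B\<in>?F. \<forall>m. \<exists>T. wit \<Gamma> \<phi> (Suc n) m B T"
  proof (rule pigeon)
    show "finite ?F" using finite_range_proj by simp
    fix m
    obtain T where T: "wit \<Gamma> \<phi> n m A T" using assms unfolding good_wit by iprover
    have "proj n ` proj (Suc n) ` T = proj n ` T" by (simp add: image_image proj_proj)
    then have "proj n ` proj (Suc n) ` T = A" using T unfolding wit_def by simp
    then have "proj (Suc n) ` T \<in> ?F" by auto
    moreover have "wit \<Gamma> \<phi> (Suc n) m (proj (Suc n) ` T) T" using T unfolding wit_def by simp
    ultimately show "\<exists>B\<in>?F. \<exists>T. wit \<Gamma> \<phi> (Suc n) m B T" by blast
  next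
    fix m m' B assume "m' \<le> (m::nat)" "\<exists>T. wit \<Gamma> \<phi> (Suc n) m B T"
    then show "\<exists>T. wit \<Gamma> \<phi> (Suc n) m' B T" using wit_mono by iprover
  qed
  then show ?thesis unfolding good_wit by auto
qed

lemma good_fix: "good \<Gamma> \<phi> n A \<Longrightarrow> x \<in> A \<Longrightarrow> proj n x = x"
  unfolding good_def by (metis imageE proj_idem)

lemma construct:
  assumes H: "\<And>\<Gamma>0. \<Gamma>0 \<subseteq> \<Gamma> \<Longrightarrow> finite \<Gamma>0 \<Longrightarrow> \<exists>T. (\<forall>\<psi>\<in>\<Gamma>0. team_sat T \<psi>) \<and> \<not> team_sat T \<phi>"
  shows "\<exists>T. (\<forall>\<psi>\<in>\<Gamma>. team_sat T \<psi>) \<and> \<not> team_sat T \<phi>"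
proof -
  obtain A0 where A0: "good \<Gamma> \<phi> 0 A0" using step2[OF step1[OF H]] by blast
  define A where "A = rec_nat A0 (\<lambda>n B. SOME B'. good \<Gamma> \<phi> (Suc n) B' \<and> proj n ` B' = B)"
  have A0': "A 0 = A0" and AS: "\<And>n. A (Suc n) = (SOME B'. good \<Gamma> \<phi> (Suc n) B' \<and> proj n ` B' = A n)"
    by (simp_all add: A_def)
  have gA: "good \<Gamma> \<phi> n (A n) \<and> (\<forall>k. n = Suc k \<longrightarrow> proj k ` A n = A k)" for n
  proof (induction n)
    case 0 then show ?case using A0 A0' by simp
  next
    case (Suc n)
    from Suc.IH have gn: "good \<Gamma> \<phi> n (A n)" by (rule conjunct1)
    from step3[OF gn] have ex: "\<exists>B. good \<Gamma> \<phi> (Suc n) B \<and> proj n ` B = A n" .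
    have gc: "good \<Gamma> \<phi> (Suc n) (A (Suc n)) \<and> proj n ` A (Suc n) = A n"
      unfolding AS by (rule someI_ex[OF ex])
    show ?case
    proof (intro conjI allI impI)
      show "good \<Gamma> \<phi> (Suc n) (A (Suc n))" using gc by (rule conjunct1)
      fix k assume "Suc n = Suc k"
      then have "k = n" by simp
      then show "proj k ` A (Suc n) = A k" using gc by simp
    qed
  qed
  have good: "good \<Gamma> \<phi> n (A n)" and coh: "proj n ` A (Suc n) = A n" for n using gA by auto
  have fixA: "x \<in> A n \<Longrightarrow> proj n x = x" for x n using good_fix[OF good] .
  have cohle: "proj m ` A n = A m" if "m \<le> n" for m n
    using that
  proof (induction n rule: dec_induct)
    case base
    obtain T0 where "wit \<Gamma> \<phi> m 0 (A m) T0" using good[of m] unfolding good_wit by blast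
    then have "proj m ` T0 = A m" unfolding wit_def by (rule conjunct1)
    then show ?case using proj_image_idem[of m T0] by (simp only:)
  next
    case (step k)
    have "proj m ` A (Suc k) = proj m ` proj k ` A (Suc k)"
      using step.hyps by (simp add: image_image proj_proj)
    then show ?case using coh step.IH by simp
  qed
  define T where "T = {s. \<forall>n. proj n s \<in> A n}"
  have projT: "proj n ` T = A n" for n
  proof
    show "proj n ` T \<subseteq> A n" unfolding T_def by auto
    show "A n \<subseteq> proj n ` T"
    proof
      fix a assume a: "a \<in> A n"
      define g where "g = rec_nat a (\<lambda>k b. SOME b'. b' \<in> A (Suc (n+k)) \<and> proj (n+k) b' = b)"
      have g0: "g 0 = a" and gS: "\<And>k. g (Suc k) = (SOME b'. b' \<in> A (Suc (n+k)) \<and> proj (n+k) b' = g k)"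
        by (simp_all add: g_def)
      have gk: "g k \<in> A (n+k) \<and> (\<forall>j. k = Suc j \<longrightarrow> proj (n+j) (g k) = g j)" for k
      proof (induction k)
        case 0 then show ?case using a g0 by simp
      next
        case (Suc k)
        then have "g k \<in> proj (n+k) ` A (Suc (n+k))" using coh by simp
        then have "\<exists>b'. b' \<in> A (Suc (n+k)) \<and> proj (n+k) b' = g k" by auto
        then have "g (Suc k) \<in> A (Suc (n+k)) \<and> proj (n+k) (g (Suc k)) = g k"
          unfolding gS by (rule someI_ex)
        then show ?case by simp
      qed
      have gmem: "g k \<in> A (n+k)" for k using gk by simp
      have gfix: "proj (n+k) (g k) = g k" for k using fixA gmem by blast
      have gcoh: "proj (n+k) (g j) = g k" if "k \<le> j" for k j
        using that
      proof (induction j rule: dec_induct)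
        case base then show ?case using gfix by simp
      next
        case (step j)
        have "proj (n+k) (g (Suc j)) = proj (n+k) (proj (n+j) (g (Suc j)))"
          using step.hyps by (simp add: proj_proj)
        also have "\<dots> = proj (n+k) (g j)" using gk[of "Suc j"] by simp
        finally show ?case using step.IH by simp
      qed
      define s where "s i = g (Suc i) i" for i
      have ps: "proj (n+k) s = g k" for k
      proof
        fix i
        show "proj (n+k) s i = g k i"
        proof (cases "i < n+k")
          case True
          let ?j = "max (Suc i) k"
          have "g (Suc i) i = proj (n + Suc i) (g ?j) i" using gcoh[of "Suc i" ?j] by simp
          also have "\<dots> = g ?j i" by (simp add: proj_def)
          finally have 1: "g (Suc i) i = g ?j i" .
          have "g k i = proj (n+k) (g ?j) i" using gcoh[of k ?j] by simp
          also have "\<dots> = g ?j i" using True by (simp add: proj_def)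
          finally show ?thesis using 1 True by (simp add: proj_def s_def)
        next
          case False
          have "g k i = proj (n+k) (g k) i" using gfix by simp
          then show ?thesis using False by (simp add: proj_def)
        qed
      qed
      have "s \<in> T" unfolding T_def
      proof (intro CollectI allI)
        fix m
        show "proj m s \<in> A m"
        proof (cases "m \<le> n")
          case True
          have "proj m s = proj m (proj n s)" using True by (simp add: proj_proj)
          also have "\<dots> = proj m a" using ps[of 0] g0 by simp
          finally show ?thesis using cohle[OF True] a by auto
        next
          case False
          then have "m = n + (m-n)" by simp
          then show ?thesis using ps[of "m-n"] gmem[of "m-n"] by metis
        qed
      qed
      moreover have "proj n s = a" using ps[of 0] g0 by simp
      ultimately show "a \<in> proj n ` T" by blast
    qed
  qed
  have "\<forall>\<psi>\<in>\<Gamma>. team_sat T \<psi>"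
  proof
    fix \<psi> assume \<psi>: "\<psi> \<in> \<Gamma>"
    let ?n = "ptb \<psi>"
    obtain T' where T': "wit \<Gamma> \<phi> ?n ?n (A ?n) T'" using good[of ?n] unfolding good_wit by blast
    have "\<psi> \<in> Gm \<Gamma> ?n" using \<psi> unfolding Gm_def by simp
    then have "team_sat T' \<psi>" using T' unfolding wit_def by blast
    moreover have "proj ?n ` T = proj ?n ` T'" using T' projT[of ?n] unfolding wit_def by simp
    ultimately show "team_sat T \<psi>" using loc[of ?n T T' \<psi>] by simp
  qed
  moreover have "\<not> team_sat T \<phi>"
  proof -
    let ?n = "ptb \<phi>"
    obtain T' where T': "wit \<Gamma> \<phi> ?n 0 (A ?n) T'" using good[of ?n] unfolding good_wit by blast
    then have "\<not> team_sat T' \<phi>" unfolding wit_def by blast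
    moreover have "proj ?n ` T = proj ?n ` T'" using T' projT[of ?n] unfolding wit_def by simp
    ultimately show ?thesis using loc[of ?n T T' \<phi>] by simp
  qed
  ultimately show ?thesis by blast
qed

theorem mainTheorem2:
  fixes \<Gamma> :: "ptl set" and \<phi> :: ptl
  assumes "ptl_entails \<Gamma> \<phi>"
  shows "\<exists>\<Gamma>0\<subseteq>\<Gamma>. finite \<Gamma>0 \<and> ptl_entails \<Gamma>0 \<phi>"
proof (rule ccontr)
  assume "\<not> ?thesis"
  then have "\<And>\<Gamma>0. \<Gamma>0 \<subseteq> \<Gamma> \<Longrightarrow> finite \<Gamma>0 \<Longrightarrow> \<exists>T. (\<forall>\<psi>\<in>\<Gamma>0. team_sat T \<psi>) \<and> \<not> team_sat T \<phi>"
    unfolding ptl_entails_def by blast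
  from construct[OF this] show False using assms unfolding ptl_entails_def by blast
qed

end
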